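(* Let $G$ be a strongly antimagic graph, let $k\ge1$, and let $V_k=\{v\in V(G):\deg(v)=k\}$. Let $G'$ be the graph obtained from $G$ by attaching, for each vertex $v\in V_k$, a new vertex $v'$ together with the edge $vv'$ (distinct new vertices for distinct $v$). Then $G'$ is strongly antimagic.
   Context: All graphs are finite and simple. For a graph $G=(V,E)$ and a bijection $f:E\to\{1,\dots,|E|\}$, the vertex sum is $\varphi_f(u)=\sum_{e\in E(u)}f(e)$ with $E(u)$ the set of edges incident to $u$; $f$ is strongly antimagic if the $\varphi_f(u)$ are pairwise distinct over $V$ and $\deg(u)<\deg(v)$ implies $\varphi_f(u)<\varphi_f(v)$; a graph is strongly antimagic if it admits such a labeling. *)

theory Defs
  imports Main
begin

definition simple_graph :: "'a set \<Rightarrow> 'a set set \<Rightarrow> bool" where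
  "simple_graph V E \<longleftrightarrow> finite V \<and>
     (\<forall>e\<in>E. \<exists>u v. u \<noteq> v \<and> u \<in> V \<and> v \<in> V \<and> e = {u, v})"

definition incident_edges :: "'a set set \<Rightarrow> 'a \<Rightarrow> 'a set set" where
  "incident_edges E u = {e \<in> E. u \<in> e}"

definition degree :: "'a set set \<Rightarrow> 'a \<Rightarrow> nat" where
  "degree E u = card (incident_edges E u)"

definition vertex_sum :: "('a set \<Rightarrow> nat) \<Rightarrow> 'a set set \<Rightarrow> 'a \<Rightarrow> nat" where
  "vertex_sum f E u = (\<Sum>e\<in>incident_edges E u. f e)"

definition strongly_antimagic_labeling :: "'a set \<Rightarrow> 'a set set \<Rightarrow> ('a set \<Rightarrow> nat) \<Rightarrow> bool" where
  "strongly_antimagic_labeling V E f \<longleftrightarrow>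
     bij_betw f E {1..card E} \<and>
     inj_on (vertex_sum f E) V \<and>
     (\<forall>u\<in>V. \<forall>v\<in>V. degree E u < degree E v \<longrightarrow> vertex_sum f E u < vertex_sum f E v)"

definition strongly_antimagic :: "'a set \<Rightarrow> 'a set set \<Rightarrow> bool" where
  "strongly_antimagic V E \<longleftrightarrow> (\<exists>f. strongly_antimagic_labeling V E f)"

end

theory Submission
  imports Defs
begin

theorem theorem8:
  fixes V :: "'a set" and E :: "'a set set" and k :: nat and p :: "'a \<Rightarrow> 'a"
  assumes "simple_graph V E"
    and "strongly_antimagic V E"
    and "k \<ge> 1"
    and "inj_on p {v \<in> V. degree E v = k}"
    and "p ` {v \<in> V. degree E v = k} \<inter> V = {}"
  shows "strongly_antimagic (V \<union> p ` {v \<in> V. degree E v = k})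
           (E \<union> (\<lambda>v. {v, p v}) ` {v \<in> V. degree E v = k})"
proof -
  from assms(2) obtain f where fl: "strongly_antimagic_labeling V E f"
    unfolding strongly_antimagic_def by blast
  hence fbij: "bij_betw f E {1..card E}" and finj: "inj_on (vertex_sum f E) V"
    and fmono: "\<forall>u\<in>V. \<forall>v\<in>V. degree E u < degree E v \<longrightarrow> vertex_sum f E u < vertex_sum f E v"
    unfolding strongly_antimagic_labeling_def by auto
  define Vk where "Vk = {v \<in> V. degree E v = k}"
  define r where "r = card Vk"
  define h where "h = (\<lambda>v. {v, p v})"
  define \<phi> where "\<phi> = vertex_sum f E"
  define g where "g = (\<lambda>u. card {v\<in>Vk. \<phi> v \<le> \<phi> u})"
  define F where "F = (\<lambda>e. if e \<in> E then f e + r else g (inv_into Vk h e))"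
  define E' where "E' = E \<union> h ` Vk"
  define V' where "V' = V \<union> p ` Vk"
  have finV: "finite V" using assms(1) simple_graph_def by auto
  have EV: "\<And>e. e \<in> E \<Longrightarrow> e \<subseteq> V"
  proof -
    fix e assume "e \<in> E"
    then obtain u v where "u \<in> V" "v \<in> V" "e = {u, v}"
      using assms(1) unfolding simple_graph_def by meson
    thus "e \<subseteq> V" by simp
  qed
  have finE: "finite E"
  proof -
    have "E \<subseteq> Pow V" using EV by blast
    thus ?thesis using finV finite_subset by blast
  qed
  have finVk: "finite Vk" by (simp add: Vk_def finV)
  have VkV: "Vk \<subseteq> V" by (auto simp: Vk_def)
  have pnot: "\<And>v. v \<in> Vk \<Longrightarrow> p v \<notin> V" using assms(5) Vk_def by blast
  have pinj: "inj_on p Vk" using assms(4) Vk_def by simp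
  have hnotE: "\<And>v. v \<in> Vk \<Longrightarrow> h v \<notin> E"
    using EV pnot h_def by blast
  have hinj: "inj_on h Vk"
  proof (rule inj_onI)
    fix a b assume a: "a \<in> Vk" and b: "b \<in> Vk" and e: "h a = h b"
    hence "a = b \<or> a = p b" unfolding h_def by (metis doubleton_eq_iff)
    thus "a = b" using a b pnot VkV by blast
  qed
  have hbij: "bij_betw h Vk (h ` Vk)" using hinj by (simp add: bij_betw_imageI)
  have invh: "\<And>v. v \<in> Vk \<Longrightarrow> inv_into Vk h (h v) = v" using hinj inv_into_f_f by metis
  have phi_inj: "inj_on \<phi> V" using finj \<phi>_def by simp
  have phi_mono: "\<And>u v. u \<in> V \<Longrightarrow> v \<in> V \<Longrightarrow> degree E u < degree E v \<Longrightarrow> \<phi> u < \<phi> v"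
    using fmono \<phi>_def by blast
  have f_pos: "\<And>e. e \<in> E \<Longrightarrow> 1 \<le> f e" using fbij bij_betw_apply by fastforce
  have finc: "\<And>u. finite (incident_edges E u)" using finE by (simp add: incident_edges_def)
  have phi_ge: "\<And>u. degree E u \<le> \<phi> u"
  proof -
    fix u
    have "degree E u = (\<Sum>e\<in>incident_edges E u. 1)" by (simp add: degree_def)
    also have "\<dots> \<le> (\<Sum>e\<in>incident_edges E u. f e)"
      by (rule sum_mono) (use f_pos in \<open>auto simp: incident_edges_def\<close>)
    finally show "degree E u \<le> \<phi> u" by (simp add: \<phi>_def vertex_sum_def)
  qed
  have phi_0: "\<And>u. degree E u = 0 \<Longrightarrow> \<phi> u = 0"
    using finc by (simp add: degree_def \<phi>_def vertex_sum_def)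
  have g_range: "\<And>u. u \<in> Vk \<Longrightarrow> 1 \<le> g u \<and> g u \<le> r"
  proof -
    fix u assume u: "u \<in> Vk"
    have fin: "finite {v\<in>Vk. \<phi> v \<le> \<phi> u}" using finVk by simp
    have "u \<in> {v\<in>Vk. \<phi> v \<le> \<phi> u}" using u by simp
    hence "1 \<le> g u" using fin unfolding g_def
      by (metis One_nat_def Suc_leI card_gt_0_iff empty_iff)
    moreover have "g u \<le> r" unfolding g_def r_def by (rule card_mono[OF finVk]) auto
    ultimately show "1 \<le> g u \<and> g u \<le> r" by simp
  qed
  have g_mono: "\<And>u v. u \<in> Vk \<Longrightarrow> v \<in> Vk \<Longrightarrow> \<phi> u < \<phi> v \<Longrightarrow> g u < g v"
  proof -
    fix u v assume u: "u \<in> Vk" and v: "v \<in> Vk" and l: "\<phi> u < \<phi> v"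
    have "v \<in> {w\<in>Vk. \<phi> w \<le> \<phi> v}" "v \<notin> {w\<in>Vk. \<phi> w \<le> \<phi> u}" using v l by auto
    moreover have "{w\<in>Vk. \<phi> w \<le> \<phi> u} \<subseteq> {w\<in>Vk. \<phi> w \<le> \<phi> v}" using l by auto
    ultimately have "{w\<in>Vk. \<phi> w \<le> \<phi> u} \<subset> {w\<in>Vk. \<phi> w \<le> \<phi> v}" by blast
    thus "g u < g v" unfolding g_def by (rule psubset_card_mono[rotated]) (simp add: finVk)
  qed
  have g_inj: "inj_on g Vk"
  proof (rule inj_onI)
    fix u v assume u: "u \<in> Vk" and v: "v \<in> Vk" and e: "g u = g v"
    show "u = v"
    proof (rule ccontr)
      assume "u \<noteq> v"
      hence "\<phi> u \<noteq> \<phi> v" using phi_inj u v VkV inj_on_def by (metis subsetD)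
      hence "\<phi> u < \<phi> v \<or> \<phi> v < \<phi> u" by arith
      thus False using g_mono u v e by (metis less_irrefl)
    qed
  qed
  have g_bij: "bij_betw g Vk {1..r}"
  proof -
    have sub: "g ` Vk \<subseteq> {1..r}" using g_range by auto
    have "card (g ` Vk) = card {1..r}" using card_image[OF g_inj] r_def by simp
    hence "g ` Vk = {1..r}" using card_subset_eq[OF _ sub] by simp
    thus ?thesis using g_inj by (simp add: bij_betw_def)
  qed
  have b1: "bij_betw F E {r+1..r+card E}"
  proof -
    have "bij_betw (\<lambda>n. n + r) {1..card E} {1+r..card E+r}"
      by (simp add: bij_betw_def inj_on_def)
    hence "bij_betw ((\<lambda>n. n + r) \<circ> f) E {1+r..card E+r}"
      using bij_betw_trans[OF fbij] by blast
    hence "bij_betw ((\<lambda>n. n + r) \<circ> f) E {r+1..r+card E}" by (simp add: add.commute)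
    thus ?thesis by (rule bij_betw_cong[THEN iffD1, rotated]) (simp add: F_def)
  qed
  have b2: "bij_betw F (h ` Vk) {1..r}"
  proof -
    have "bij_betw (g \<circ> inv_into Vk h) (h ` Vk) {1..r}"
      using bij_betw_trans[OF bij_betw_inv_into[OF hbij] g_bij] .
    thus ?thesis by (rule bij_betw_cong[THEN iffD1, rotated]) (auto simp: F_def hnotE)
  qed
  have disj: "E \<inter> h ` Vk = {}" using hnotE by blast
  have cardE': "card E' = card E + r"
    unfolding E'_def r_def using card_Un_disjoint[OF finE _ disj] finVk card_image[OF hinj] by simp
  have Fbij: "bij_betw F E' {1..card E'}"
  proof -
    have "bij_betw F (E \<union> h ` Vk) ({r+1..r+card E} \<union> {1..r})"
      by (rule bij_betw_combine[OF b1 b2]) auto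
    moreover have "{r+1..r+card E} \<union> {1..r} = {1..card E'}" using cardE' by auto
    ultimately show ?thesis by (simp add: E'_def)
  qed
  have inc_old: "\<And>u. u \<in> V \<Longrightarrow> incident_edges E' u = incident_edges E u \<union> (if u \<in> Vk then {h u} else {})"
  proof -
    fix u assume u: "u \<in> V"
    have hw: "\<And>w. w \<in> Vk \<Longrightarrow> u \<in> h w \<longleftrightarrow> w = u"
      using u pnot unfolding h_def by auto
    show "incident_edges E' u = incident_edges E u \<union> (if u \<in> Vk then {h u} else {})"
      unfolding incident_edges_def E'_def using hw by auto
  qed
  have inc_new: "\<And>v. v \<in> Vk \<Longrightarrow> incident_edges E' (p v) = {h v}"
  proof -
    fix v assume v: "v \<in> Vk"
    show "incident_edges E' (p v) = {h v}"
      unfolding incident_edges_def E'_def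
    proof (intro equalityI subsetI)
      fix e assume "e \<in> {e \<in> E \<union> h ` Vk. p v \<in> e}"
      hence e: "e \<in> E \<union> h ` Vk" "p v \<in> e" by auto
      have "e \<notin> E"
      proof
        assume "e \<in> E"
        hence "p v \<in> V" using EV e(2) by blast
        thus False using pnot v by simp
      qed
      then obtain w where w: "w \<in> Vk" "e = h w" using e by blast
      hence "p v = w \<or> p v = p w" using e unfolding h_def by auto
      moreover have "p v \<noteq> w" using pnot v w VkV by auto
      ultimately have "p v = p w" by simp
      hence "w = v" using pinj v w by (simp add: inj_on_eq_iff)
      thus "e \<in> {h v}" using w by simp
    qed (auto simp: v h_def)
  qed
  define S where "S = vertex_sum F E'"
  define D where "D = degree E'"
  have D_old: "\<And>u. u \<in> V \<Longrightarrow> D u = degree E u + (if u \<in> Vk then 1 else 0)"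
  proof -
    fix u assume u: "u \<in> V"
    show "D u = degree E u + (if u \<in> Vk then 1 else 0)"
    proof (cases "u \<in> Vk")
      case True
      have "h u \<notin> incident_edges E u" using hnotE True by (simp add: incident_edges_def)
      thus ?thesis using True inc_old[OF u] finc by (simp add: D_def degree_def)
    next
      case False
      thus ?thesis using inc_old[OF u] by (simp add: D_def degree_def)
    qed
  qed
  have sum_old: "\<And>u. (\<Sum>e\<in>incident_edges E u. F e) = \<phi> u + r * degree E u"
  proof -
    fix u
    have "(\<Sum>e\<in>incident_edges E u. F e) = (\<Sum>e\<in>incident_edges E u. f e + r)"
      by (rule sum.cong) (auto simp: F_def incident_edges_def)
    also have "\<dots> = \<phi> u + r * degree E u"
      by (simp add: sum.distrib \<phi>_def vertex_sum_def degree_def mult.commute)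
    finally show "(\<Sum>e\<in>incident_edges E u. F e) = \<phi> u + r * degree E u" .
  qed
  have S_old: "\<And>u. u \<in> V \<Longrightarrow> S u = \<phi> u + r * degree E u + (if u \<in> Vk then g u else 0)"
  proof -
    fix u assume u: "u \<in> V"
    show "S u = \<phi> u + r * degree E u + (if u \<in> Vk then g u else 0)"
    proof (cases "u \<in> Vk")
      case True
      have "h u \<notin> incident_edges E u" using hnotE True by (simp add: incident_edges_def)
      moreover have "F (h u) = g u" using True hnotE invh by (simp add: F_def)
      ultimately show ?thesis using True inc_old[OF u] finc sum_old
        by (simp add: S_def vertex_sum_def)
    next
      case False
      thus ?thesis using inc_old[OF u] sum_old by (simp add: S_def vertex_sum_def)
    qed
  qed
  have D_new: "\<And>v. v \<in> Vk \<Longrightarrow> D (p v) = 1"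
    using inc_new by (simp add: D_def degree_def)
  have S_new: "\<And>v. v \<in> Vk \<Longrightarrow> S (p v) = g v"
    using inc_new hnotE invh by (simp add: S_def vertex_sum_def F_def)
  define R where "R = (\<lambda>a b. S a < S b \<and> D a \<le> D b)"
  have newold: "\<And>v u. v \<in> Vk \<Longrightarrow> u \<in> V \<Longrightarrow> R (p v) u \<or> R u (p v)"
  proof -
    fix v u assume v: "v \<in> Vk" and u: "u \<in> V"
    show "R (p v) u \<or> R u (p v)"
    proof (cases "degree E u = 0")
      case True
      hence "u \<notin> Vk" using assms(3) Vk_def by auto
      hence "S u = 0" "D u = 0" using S_old[OF u] D_old[OF u] True phi_0 by auto
      thus ?thesis using g_range[OF v] S_new[OF v] D_new[OF v] R_def by simp
    next
      case False
      have "r * 1 \<le> r * degree E u" using False by (intro mult_le_mono2) simp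
      moreover have "S u \<ge> \<phi> u + r * degree E u" using S_old[OF u] by simp
      ultimately have "S u > r" using phi_ge[of u] False by linarith
      moreover have "D u \<ge> 1" using D_old[OF u] False by simp
      ultimately show ?thesis using g_range[OF v] S_new[OF v] D_new[OF v] R_def by simp
    qed
  qed
  have oldold: "\<And>a b. a \<in> Vk \<Longrightarrow> b \<in> V \<Longrightarrow> b \<notin> Vk \<Longrightarrow> R a b \<or> R b a"
  proof -
    fix a b assume a: "a \<in> Vk" and b: "b \<in> V" and nb: "b \<notin> Vk"
    have aV: "a \<in> V" using a VkV by auto
    have da: "degree E a = k" using a Vk_def by simp
    have db: "degree E b \<noteq> k" using b nb Vk_def by simp
    have Sa: "S a = \<phi> a + r * k + g a" using S_old[OF aV] a da by simp
    have Sb: "S b = \<phi> b + r * degree E b" using S_old[OF b] nb by simp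
    have Da: "D a = k + 1" using D_old[OF aV] a da by simp
    have Db: "D b = degree E b" using D_old[OF b] nb by simp
    show "R a b \<or> R b a"
    proof (cases "degree E b > k")
      case True
      have "\<phi> a < \<phi> b" using phi_mono[OF aV b] True da by simp
      moreover have "r * k + r \<le> r * degree E b" using mult_le_mono2[of "k+1" "degree E b" r] True by simp
      moreover have "g a \<le> r" using g_range a by blast
      ultimately have "S a < S b" using Sa Sb by linarith
      thus ?thesis using Da Db True R_def by simp
    next
      case False
      hence lt: "degree E b < k" using db by simp
      have "\<phi> b < \<phi> a" using phi_mono[OF b aV] lt da by simp
      moreover have "r * degree E b \<le> r * k" using lt by (intro mult_le_mono2) simp
      ultimately have "S b < S a" using Sa Sb by linarith
      thus ?thesis using Da Db lt R_def by simp
    qed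
  qed
  have main: "\<And>a b. a \<in> V' \<Longrightarrow> b \<in> V' \<Longrightarrow> a \<noteq> b \<Longrightarrow> R a b \<or> R b a"
  proof -
    fix a b assume a: "a \<in> V'" and b: "b \<in> V'" and ab: "a \<noteq> b"
    show "R a b \<or> R b a"
    proof (cases "a \<in> V")
      case aV: True
      show ?thesis
      proof (cases "b \<in> V")
        case bV: True
        show ?thesis
        proof (cases "a \<in> Vk")
          case aK: True
          show ?thesis
          proof (cases "b \<in> Vk")
            case bK: True
            have "\<phi> a \<noteq> \<phi> b" using phi_inj aV bV ab inj_on_def by metis
            hence "\<phi> a < \<phi> b \<or> \<phi> b < \<phi> a" by arith
            moreover have "degree E a = degree E b" using aK bK Vk_def by simp
            ultimately show ?thesis using g_mono[OF aK bK] g_mono[OF bK aK]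
                S_old[OF aV] S_old[OF bV] D_old[OF aV] D_old[OF bV] aK bK R_def
              by (auto simp: add_less_le_mono)
          next
            case bK: False
            show ?thesis using oldold[OF aK bV bK] .
          qed
        next
          case aK: False
          show ?thesis
          proof (cases "b \<in> Vk")
            case bK: True
            show ?thesis using oldold[OF bK aV aK] by blast
          next
            case bK: False
            have Sa: "S a = \<phi> a + r * degree E a" using S_old[OF aV] aK by simp
            have Sb: "S b = \<phi> b + r * degree E b" using S_old[OF bV] bK by simp
            have Da: "D a = degree E a" using D_old[OF aV] aK by simp
            have Db: "D b = degree E b" using D_old[OF bV] bK by simp
            consider "degree E a < degree E b" | "degree E b < degree E a" | "degree E a = degree E b"
              by arith
            thus ?thesis
            proof cases
              case 1
              have "\<phi> a < \<phi> b" using phi_mono[OF aV bV 1] .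
              moreover have "r * degree E a \<le> r * degree E b" using 1 by simp
              ultimately have "S a < S b" using Sa Sb by linarith
              thus ?thesis using Da Db 1 R_def by simp
            next
              case 2
              have "\<phi> b < \<phi> a" using phi_mono[OF bV aV 2] .
              moreover have "r * degree E b \<le> r * degree E a" using 2 by simp
              ultimately have "S b < S a" using Sa Sb by linarith
              thus ?thesis using Da Db 2 R_def by simp
            next
              case 3
              have "\<phi> a \<noteq> \<phi> b" using phi_inj aV bV ab inj_on_def by metis
              thus ?thesis using Sa Sb Da Db 3 R_def by auto
            qed
          qed
        qed
      next
        case False
        then obtain w where w: "w \<in> Vk" "b = p w" using b V'_def by blast
        show ?thesis using newold[OF w(1) aV] w by blast
      qed
    next
      case False
      then obtain v where v: "v \<in> Vk" "a = p v" using a V'_def by blast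
      show ?thesis
      proof (cases "b \<in> V")
        case True
        show ?thesis using newold[OF v(1) True] v by blast
      next
        case False
        then obtain w where w: "w \<in> Vk" "b = p w" using b V'_def by blast
        have "v \<noteq> w" using v w ab by blast
        hence "g v \<noteq> g w" using g_inj v w inj_on_def by metis
        hence "g v < g w \<or> g w < g v" by arith
        thus ?thesis using S_new D_new v w R_def by auto
      qed
    qed
  qed
  have "strongly_antimagic_labeling V' E' F"
    unfolding strongly_antimagic_labeling_def
  proof (intro conjI)
    show "bij_betw F E' {1..card E'}" by (rule Fbij)
    show "inj_on (vertex_sum F E') V'"
    proof (rule inj_onI)
      fix a b assume "a \<in> V'" "b \<in> V'" "vertex_sum F E' a = vertex_sum F E' b"
      thus "a = b" using main R_def S_def by fastforce
    qed
    show "\<forall>u\<in>V'. \<forall>v\<in>V'. degree E' u < degree E' v \<longrightarrow> vertex_sum F E' u < vertex_sum F E' v"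
      using main R_def S_def D_def by fastforce
  qed
  hence "strongly_antimagic V' E'" unfolding strongly_antimagic_def by blast
  thus ?thesis unfolding V'_def E'_def Vk_def h_def .
qed

end
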